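(* Let $Z$ be a decision structure. Every quotient graph in the module decomposition of $Z$ is either prime or a directed path with at least three nodes all of whose arcs carry the same label.
   Context: A decision structure is a finite directed acyclic graph $Z=(N,A)$, $A\subseteq N\times N$, with a unique source, together with an arc labelling $\ell:A\to\mathcal{R}$ (into a set $\mathcal{R}$ of return values) and a node labelling by actions, such that distinct arcs leaving the same node have distinct labels; the arc out of $v$ labelled $r$, if it exists, is the $r$-arc out of $v$. For $X\subseteq N$, $Z[X]$ is the induced subgraph with inherited labels. A subset $X\subseteq N(Z)$ is a module of $Z$ if $Z[X]$ has a unique source and for every node $v\notin X$: (i) every arc from $v$ to a node of $X$ ends at the source of $Z[X]$; (ii) if for some $x\in X$ there is an arc from $x$ to $v$ labelled $r$, then every $x'\in X$ has an $r$-arc, and it ends either at $v$ or in $X$. Modules $N(Z)$ and $\{v\}$ are trivial; $Z$ is prime if all its modules are trivial. A module is maximal if it is a proper subset of $N(Z)$ contained in no module other than itself and $N(Z)$. A modular partition is a partition of $N(Z)$ into modules; it is maximal if all blocks are maximal modules. For a partition $P$ of $N(Z)$, the quotient $Z/P$ has node set $P$ and an arc $(S,T)$, $S\neq T$, labelled $r$ whenever some $r$-labelled arc goes from $S$ to $T$; the $Z[S]$, $S\in P$, are the factors. A directed path with $m$ nodes has nodes $u_1,\dots,u_m$ and arcs exactly $(u_i,u_{i+1})$; its length is $m-1$. Module decomposition: for $Z$ with at least two nodes, exactly one of the following holds: (1) $Z$ has a unique maximal partition; (2) there is a unique modular partition $P$ such that $Z/P$ is a directed path with at least three nodes whose arcs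 all carry the same label and whose length is maximal among modular partitions $R$ with $Z/R$ a path. Let $P$ be the partition of (1) or (2) accordingly. The module decomposition of $Z$ consists of the quotient $Z/P$ together with (recursively) the module decompositions of all factors $Z[S]$, $S\in P$, with at least two nodes; a one-node structure has empty decomposition. The quotient graphs in the module decomposition are all the quotients produced in this recursion. *)

theory Defs
  imports Main
begin

text \<open>A labelled directed graph: a node set together with a set of labelled arcs
  (u, r, v), meaning an arc from u to v carrying return value r.\<close>

type_synonym ('n, 'r) lgraph = "'n set \<times> ('n \<times> 'r \<times> 'n) set"

definition nodes :: "('n, 'r) lgraph \<Rightarrow> 'n set" where
  "nodes Z = fst Z"

definition larcs :: "('n, 'r) lgraph \<Rightarrow> ('n \<times> 'r \<times> 'n) set" where
  "larcs Z = snd Z"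

definition arcs :: "('n, 'r) lgraph \<Rightarrow> ('n \<times> 'n) set" where
  "arcs Z = {(u, v). \<exists>r. (u, r, v) \<in> larcs Z}"

definition is_source :: "('n, 'r) lgraph \<Rightarrow> 'n \<Rightarrow> bool" where
  "is_source Z s \<longleftrightarrow> s \<in> nodes Z \<and> (\<forall>u. (u, s) \<notin> arcs Z)"

definition unique_source :: "('n, 'r) lgraph \<Rightarrow> bool" where
  "unique_source Z \<longleftrightarrow> (\<exists>!s. is_source Z s)"

definition source :: "('n, 'r) lgraph \<Rightarrow> 'n" where
  "source Z = (THE s. is_source Z s)"

text \<open>Decision structure (node labelling by actions is irrelevant here and omitted):
  finite DAG with unique source; the labelling is a function on arcs
  (one label per arc); distinct arcs leaving a node carry distinct labels.\<close>
definition decision_structure :: "('n, 'r) lgraph \<Rightarrow> bool" where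
  "decision_structure Z \<longleftrightarrow>
     finite (nodes Z) \<and>
     (\<forall>(u, r, v) \<in> larcs Z. u \<in> nodes Z \<and> v \<in> nodes Z) \<and>
     acyclic (arcs Z) \<and>
     unique_source Z \<and>
     (\<forall>u v r r'. (u, r, v) \<in> larcs Z \<longrightarrow> (u, r', v) \<in> larcs Z \<longrightarrow> r = r') \<and>
     (\<forall>u v w r. (u, r, v) \<in> larcs Z \<longrightarrow> (u, r, w) \<in> larcs Z \<longrightarrow> v = w)"

definition induced :: "('n, 'r) lgraph \<Rightarrow> 'n set \<Rightarrow> ('n, 'r) lgraph" where
  "induced Z X = (X, {(u, r, v) \<in> larcs Z. u \<in> X \<and> v \<in> X})"

definition is_module :: "('n, 'r) lgraph \<Rightarrow> 'n set \<Rightarrow> bool" where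
  "is_module Z X \<longleftrightarrow>
     X \<subseteq> nodes Z \<and> unique_source (induced Z X) \<and>
     (\<forall>v \<in> nodes Z - X.
        (\<forall>x \<in> X. (v, x) \<in> arcs Z \<longrightarrow> x = source (induced Z X)) \<and>
        (\<forall>x \<in> X. \<forall>r. (x, r, v) \<in> larcs Z \<longrightarrow>
            (\<forall>x' \<in> X. (\<exists>w. (x', r, w) \<in> larcs Z) \<and>
                       (\<forall>w. (x', r, w) \<in> larcs Z \<longrightarrow> w = v \<or> w \<in> X))))"

definition trivial_module :: "('n, 'r) lgraph \<Rightarrow> 'n set \<Rightarrow> bool" where
  "trivial_module Z X \<longleftrightarrow> X = nodes Z \<or> (\<exists>v \<in> nodes Z. X = {v})"

definition prime :: "('n, 'r) lgraph \<Rightarrow> bool" where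
  "prime Z \<longleftrightarrow> (\<forall>X. is_module Z X \<longrightarrow> trivial_module Z X)"

definition maximal_module :: "('n, 'r) lgraph \<Rightarrow> 'n set \<Rightarrow> bool" where
  "maximal_module Z X \<longleftrightarrow>
     is_module Z X \<and> X \<subset> nodes Z \<and>
     (\<forall>Y. is_module Z Y \<longrightarrow> X \<subseteq> Y \<longrightarrow> Y = X \<or> Y = nodes Z)"

definition is_partition :: "'n set \<Rightarrow> 'n set set \<Rightarrow> bool" where
  "is_partition N P \<longleftrightarrow>
     (\<forall>S \<in> P. S \<noteq> {}) \<and> \<Union>P = N \<and>
     (\<forall>S \<in> P. \<forall>T \<in> P. S \<noteq> T \<longrightarrow> S \<inter> T = {})"

definition modular_partition :: "('n, 'r) lgraph \<Rightarrow> 'n set set \<Rightarrow> bool" where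
  "modular_partition Z P \<longleftrightarrow> is_partition (nodes Z) P \<and> (\<forall>S \<in> P. is_module Z S)"

definition maximal_partition :: "('n, 'r) lgraph \<Rightarrow> 'n set set \<Rightarrow> bool" where
  "maximal_partition Z P \<longleftrightarrow> is_partition (nodes Z) P \<and> (\<forall>S \<in> P. maximal_module Z S)"

definition quotient :: "('n, 'r) lgraph \<Rightarrow> 'n set set \<Rightarrow> ('n set, 'r) lgraph" where
  "quotient Z P = (P, {(S, r, T). S \<in> P \<and> T \<in> P \<and> S \<noteq> T \<and>
                         (\<exists>u \<in> S. \<exists>v \<in> T. (u, r, v) \<in> larcs Z)})"

definition is_path :: "('n, 'r) lgraph \<Rightarrow> bool" where
  "is_path Z \<longleftrightarrow> (\<exists>us. distinct us \<and> set us = nodes Z \<and>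
      arcs Z = {(us ! i, us ! Suc i) | i. Suc i < length us})"

definition uniform_path3 :: "('n, 'r) lgraph \<Rightarrow> bool" where
  "uniform_path3 Z \<longleftrightarrow> (\<exists>us r. distinct us \<and> set us = nodes Z \<and> length us \<ge> 3 \<and>
      larcs Z = {(us ! i, r, us ! Suc i) | i. Suc i < length us})"

definition case1_partition :: "('n, 'r) lgraph \<Rightarrow> 'n set set \<Rightarrow> bool" where
  "case1_partition Z P \<longleftrightarrow> maximal_partition Z P \<and> (\<forall>P'. maximal_partition Z P' \<longrightarrow> P' = P)"

text \<open>Modular partition P with Z/P a same-label path on at least 3 nodes, of maximal
  length among modular partitions R with Z/R a path (length = number of nodes - 1).\<close>
definition path_candidate :: "('n, 'r) lgraph \<Rightarrow> 'n set set \<Rightarrow> bool" where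
  "path_candidate Z P \<longleftrightarrow> modular_partition Z P \<and> uniform_path3 (quotient Z P) \<and>
     (\<forall>R. modular_partition Z R \<longrightarrow> is_path (quotient Z R) \<longrightarrow> card R \<le> card P)"

definition case2_partition :: "('n, 'r) lgraph \<Rightarrow> 'n set set \<Rightarrow> bool" where
  "case2_partition Z P \<longleftrightarrow> path_candidate Z P \<and> (\<forall>P'. path_candidate Z P' \<longrightarrow> P' = P)"

definition decomp_partition :: "('n, 'r) lgraph \<Rightarrow> 'n set set \<Rightarrow> bool" where
  "decomp_partition Z P \<longleftrightarrow>
     (if \<exists>P'. case1_partition Z P' then case1_partition Z P else case2_partition Z P)"

inductive decomp_quotient :: "('n, 'r) lgraph \<Rightarrow> ('n set, 'r) lgraph \<Rightarrow> bool" where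
  top: "card (nodes Z) \<ge> 2 \<Longrightarrow> decomp_partition Z P \<Longrightarrow> decomp_quotient Z (quotient Z P)"
| factor: "card (nodes Z) \<ge> 2 \<Longrightarrow> decomp_partition Z P \<Longrightarrow> S \<in> P \<Longrightarrow> card S \<ge> 2 \<Longrightarrow>
     decomp_quotient (induced Z S) Q \<Longrightarrow> decomp_quotient Z Q"

end

theory Submission
  imports Defs
begin

lemma is_source_induced:
  "is_source (induced G X) s \<longleftrightarrow> s \<in> X \<and> (\<forall>u r. u \<in> X \<longrightarrow> (u,r,s) \<notin> larcs G)"
  by (auto simp: is_source_def induced_def nodes_def arcs_def larcs_def)

lemma source_is: "unique_source G \<Longrightarrow> is_source G (source G)"
  unfolding unique_source_def source_def by (rule theI')

lemma source_unique: "unique_source G \<Longrightarrow> is_source G s \<Longrightarrow> s = source G"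
  unfolding unique_source_def source_def by (metis the_equality)

lemma mod_in:
  assumes "is_module Z T" "v \<in> nodes Z" "v \<notin> T" "x \<in> T" "(v,r,x) \<in> larcs Z"
  shows "x = source (induced Z T)"
  using assms unfolding is_module_def arcs_def by blast

lemma mod_out:
  assumes "is_module Z T" "v \<in> nodes Z" "v \<notin> T" "x \<in> T" "(x,r,v) \<in> larcs Z" "x' \<in> T"
  shows "(\<exists>w. (x',r,w) \<in> larcs Z) \<and> (\<forall>w. (x',r,w) \<in> larcs Z \<longrightarrow> w = v \<or> w \<in> T)"
  using assms unfolding is_module_def by blast

lemma quot_larcs:
  "(U,r,W) \<in> larcs (quotient Z P) \<longleftrightarrow> U \<in> P \<and> W \<in> P \<and> U \<noteq> W \<and> (\<exists>u\<in>U. \<exists>w\<in>W. (u,r,w) \<in> larcs Z)"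
  by (simp add: quotient_def larcs_def)

lemma quot_nodes: "nodes (quotient Z P) = P"
  by (simp add: quotient_def nodes_def)

lemma maximal_quotient_prime:
  assumes mp: "maximal_partition Z P"
  shows "prime (quotient Z P)"
  unfolding prime_def
proof (intro allI impI)
  fix A assume Am: "is_module (quotient Z P) A"
  let ?Q = "quotient Z P"
  define X where "X = \<Union>A"
  have part: "is_partition (nodes Z) P" and mods: "\<forall>S\<in>P. maximal_module Z S"
    using mp by (auto simp: maximal_partition_def)
  have ne: "\<forall>S\<in>P. S \<noteq> {}" and un: "\<Union>P = nodes Z"
    and dis: "\<forall>S\<in>P. \<forall>T\<in>P. S \<noteq> T \<longrightarrow> S \<inter> T = {}"
    using part by (auto simp: is_partition_def)
  have ismod: "\<And>S. S \<in> P \<Longrightarrow> is_module Z S" using mods by (auto simp: maximal_module_def)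
  have AP: "A \<subseteq> P" using Am by (simp add: is_module_def quot_nodes)
  have usA: "unique_source (induced ?Q A)" using Am by (simp add: is_module_def)
  define S0 where "S0 = source (induced ?Q A)"
  have S0src: "is_source (induced ?Q A) S0" using source_is[OF usA] S0_def by simp
  hence S0A: "S0 \<in> A" and S0no: "\<And>U r. U \<in> A \<Longrightarrow> (U,r,S0) \<notin> larcs ?Q"
    by (auto simp: is_source_induced)
  have S0P: "S0 \<in> P" using S0A AP by auto
  have mc: "\<forall>v \<in> nodes ?Q - A.
        (\<forall>x \<in> A. (v, x) \<in> arcs ?Q \<longrightarrow> x = source (induced ?Q A)) \<and>
        (\<forall>x \<in> A. \<forall>r. (x, r, v) \<in> larcs ?Q \<longrightarrow>
            (\<forall>x' \<in> A. (\<exists>w. (x', r, w) \<in> larcs ?Q) \<and>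
                       (\<forall>w. (x', r, w) \<in> larcs ?Q \<longrightarrow> w = v \<or> w \<in> A)))"
    using Am unfolding is_module_def by (elim conjE)
  have Ai: "\<And>V T. V \<in> P \<Longrightarrow> V \<notin> A \<Longrightarrow> T \<in> A \<Longrightarrow> (V,T) \<in> arcs ?Q \<Longrightarrow> T = S0"
  proof -
    fix V T assume h: "V \<in> P" "V \<notin> A" "T \<in> A" "(V,T) \<in> arcs ?Q"
    have "V \<in> nodes ?Q - A" using h by (simp add: quot_nodes)
    hence "\<forall>x \<in> A. (V, x) \<in> arcs ?Q \<longrightarrow> x = source (induced ?Q A)" using mc by blast
    thus "T = S0" using h S0_def by blast
  qed
  have Aii: "\<And>V T r T'. V \<in> P \<Longrightarrow> V \<notin> A \<Longrightarrow> T \<in> A \<Longrightarrow> (T,r,V) \<in> larcs ?Q \<Longrightarrow> T' \<in> A \<Longrightarrow>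
      (\<exists>W. (T',r,W) \<in> larcs ?Q) \<and> (\<forall>W. (T',r,W) \<in> larcs ?Q \<longrightarrow> W = V \<or> W \<in> A)"
  proof -
    fix V T r T' assume h: "V \<in> P" "V \<notin> A" "T \<in> A" "(T,r,V) \<in> larcs ?Q" "T' \<in> A"
    have "V \<in> nodes ?Q - A" using h by (simp add: quot_nodes)
    hence "\<forall>x \<in> A. \<forall>r. (x, r, V) \<in> larcs ?Q \<longrightarrow>
            (\<forall>x' \<in> A. (\<exists>w. (x', r, w) \<in> larcs ?Q) \<and>
                       (\<forall>w. (x', r, w) \<in> larcs ?Q \<longrightarrow> w = V \<or> w \<in> A))" using mc by blast
    thus "(\<exists>W. (T',r,W) \<in> larcs ?Q) \<and> (\<forall>W. (T',r,W) \<in> larcs ?Q \<longrightarrow> W = V \<or> W \<in> A)"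
      using h by blast
  qed
  have blk: "\<And>x. x \<in> nodes Z \<Longrightarrow> \<exists>T\<in>P. x \<in> T" using un by auto
  have inX: "\<And>x. x \<in> X \<longleftrightarrow> (\<exists>T\<in>A. x \<in> T)" by (auto simp: X_def)
  have uniqblk: "\<And>x T T'. T \<in> P \<Longrightarrow> T' \<in> P \<Longrightarrow> x \<in> T \<Longrightarrow> x \<in> T' \<Longrightarrow> T = T'"
    using dis by blast
  have XN: "X \<subseteq> nodes Z" using AP un X_def by auto
  define s0 where "s0 = source (induced Z S0)"
  have usS0: "unique_source (induced Z S0)" using ismod[OF S0P] by (simp add: is_module_def)
  have s0src: "is_source (induced Z S0) s0" using source_is[OF usS0] s0_def by simp
  have s0S0: "s0 \<in> S0" using s0src by (simp add: is_source_induced)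
  have src: "is_source (induced Z X) s0"
    unfolding is_source_induced
  proof (intro conjI allI impI)
    show "s0 \<in> X" using s0S0 S0A inX by blast
  next
    fix u r assume "u \<in> X"
    then obtain U where U: "U \<in> A" "u \<in> U" using inX by blast
    show "(u, r, s0) \<notin> larcs Z"
    proof
      assume a: "(u, r, s0) \<in> larcs Z"
      show False
      proof (cases "U = S0")
        case True thus False using a U s0src by (auto simp: is_source_induced)
      next
        case False
        hence "(U,r,S0) \<in> larcs ?Q" unfolding quot_larcs using U a s0S0 AP S0P by blast
        thus False using S0no U by blast
      qed
    qed
  qed
  have uniq: "\<And>y. is_source (induced Z X) y \<Longrightarrow> y = s0"
  proof -
    fix y assume ys: "is_source (induced Z X) y"
    hence yX: "y \<in> X" and yno: "\<And>u r. u \<in> X \<Longrightarrow> (u,r,y) \<notin> larcs Z"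
      by (auto simp: is_source_induced)
    obtain T where T: "T \<in> A" "y \<in> T" using yX inX by blast
    have TP: "T \<in> P" using T AP by auto
    have usT: "unique_source (induced Z T)" using ismod[OF TP] by (simp add: is_module_def)
    have TX: "T \<subseteq> X" using T inX by blast
    have ysT: "is_source (induced Z T) y"
      using T(2) yno TX by (auto simp: is_source_induced)
    show "y = s0"
    proof (cases "T = S0")
      case True thus ?thesis using source_unique[OF usT ysT] s0_def by simp
    next
      case False
      have "\<not> is_source (induced ?Q A) T"
        using source_unique[OF usA] False S0_def by auto
      then obtain U r where U: "U \<in> A" "(U,r,T) \<in> larcs ?Q"
        using T by (auto simp: is_source_induced)
      then obtain u t where ut: "u \<in> U" "t \<in> T" "(u,r,t) \<in> larcs Z" "U \<noteq> T" "U \<in> P"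
        using U(2) unfolding quot_larcs by blast
      have "u \<notin> T" using ut uniqblk TP by blast
      moreover have "u \<in> nodes Z" using ut un by blast
      ultimately have "t = source (induced Z T)" using mod_in[OF ismod[OF TP]] ut by blast
      hence "t = y" using source_unique[OF usT ysT] by simp
      moreover have "u \<in> X" using ut U inX by blast
      ultimately show ?thesis using yno ut by blast
    qed
  qed
  have usX: "unique_source (induced Z X)" unfolding unique_source_def using src uniq by blast
  have sX: "source (induced Z X) = s0" using source_unique[OF usX src] by simp
  have P1: "\<And>v x. v \<in> nodes Z - X \<Longrightarrow> x \<in> X \<Longrightarrow> (v,x) \<in> arcs Z \<Longrightarrow> x = source (induced Z X)"
  proof -
    fix v x assume v: "v \<in> nodes Z - X" and x: "x \<in> X" and a: "(v,x) \<in> arcs Z"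
    obtain r where r: "(v,r,x) \<in> larcs Z" using a by (auto simp: arcs_def)
    obtain T where T: "T \<in> A" "x \<in> T" using x inX by blast
    obtain V where V: "V \<in> P" "v \<in> V" using v blk by blast
    have VA: "V \<notin> A" using V v inX by blast
    have "V \<noteq> T" using VA T by blast
    hence "(V,r,T) \<in> larcs ?Q" unfolding quot_larcs using V T AP r by blast
    hence "(V,T) \<in> arcs ?Q" by (auto simp: arcs_def)
    hence TS: "T = S0" using Ai V VA T by blast
    have "v \<notin> T" using v T inX by blast
    hence "x = s0" using mod_in[OF ismod[OF S0P]] v T r TS s0_def by blast
    thus "x = source (induced Z X)" using sX by simp
  qed
  have P2: "\<And>v x r x'. v \<in> nodes Z - X \<Longrightarrow> x \<in> X \<Longrightarrow> (x,r,v) \<in> larcs Z \<Longrightarrow> x' \<in> X \<Longrightarrow>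
     (\<exists>w. (x', r, w) \<in> larcs Z) \<and> (\<forall>w. (x', r, w) \<in> larcs Z \<longrightarrow> w = v \<or> w \<in> X)"
  proof -
    fix v x r x'
    assume v: "v \<in> nodes Z - X" and x: "x \<in> X" and a: "(x,r,v) \<in> larcs Z" and x': "x' \<in> X"
    obtain T where T: "T \<in> A" "x \<in> T" using x inX by blast
    obtain T' where T': "T' \<in> A" "x' \<in> T'" using x' inX by blast
    obtain V where V: "V \<in> P" "v \<in> V" using v blk by blast
    have VA: "V \<notin> A" using V v inX by blast
    have TP: "T \<in> P" and T'P: "T' \<in> P" using T T' AP by auto
    have vT: "v \<notin> T" using v T inX by blast
    have "V \<noteq> T" using VA T by blast
    hence qa: "(T,r,V) \<in> larcs ?Q" unfolding quot_larcs using V T AP a by blast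
    have usV: "unique_source (induced Z V)" using ismod[OF V(1)] by (simp add: is_module_def)
    have xV: "x \<notin> V" using T VA uniqblk TP V by blast
    have vsrc: "v = source (induced Z V)"
      using mod_in[OF ismod[OF V(1)] _ xV V(2) a] x XN by blast
    show "(\<exists>w. (x', r, w) \<in> larcs Z) \<and> (\<forall>w. (x', r, w) \<in> larcs Z \<longrightarrow> w = v \<or> w \<in> X)"
    proof (cases "T' = T")
      case True
      thus ?thesis using mod_out[OF ismod[OF TP] _ vT T(2) a] v T' T inX by blast
    next
      case False
      obtain W where W: "(T',r,W) \<in> larcs ?Q" using Aii[OF V(1) VA T(1) qa T'(1)] by blast
      have WVA: "W = V \<or> W \<in> A" using Aii[OF V(1) VA T(1) qa T'(1)] W by blast
      obtain u w where uw: "u \<in> T'" "w \<in> W" "(u,r,w) \<in> larcs Z" "T' \<noteq> W" "W \<in> P"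
        using W unfolding quot_larcs by blast
      have wT': "w \<notin> T'" using uw uniqblk T'P by blast
      have wN: "w \<in> nodes Z" using uw un by blast
      have mo: "(\<exists>w'. (x', r, w') \<in> larcs Z) \<and> (\<forall>w'. (x', r, w') \<in> larcs Z \<longrightarrow> w' = w \<or> w' \<in> T')"
        using mod_out[OF ismod[OF T'P] wN wT' uw(1) uw(3) T'(2)] .
      have wX: "w = v \<or> w \<in> X"
      proof (cases "W = V")
        case True
        have "u \<notin> V" using uw True T' VA uniqblk T'P V by blast
        moreover have "u \<in> nodes Z" using uw un T'P by blast
        ultimately have "w = source (induced Z V)"
          using mod_in[OF ismod[OF V(1)]] uw True by blast
        thus ?thesis using vsrc by simp
      next
        case False thus ?thesis using WVA uw inX by blast
      qed
      show ?thesis using mo wX T' inX by blast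
    qed
  qed
  have Xmod: "is_module Z X"
    unfolding is_module_def using XN usX P1 P2 by blast
  show "trivial_module ?Q A"
  proof (rule ccontr)
    assume nt: "\<not> trivial_module ?Q A"
    hence nP: "A \<noteq> P" and nS: "A \<noteq> {S0}" using S0P unfolding trivial_module_def quot_nodes by blast+
    obtain B where B: "B \<in> P" "B \<notin> A" using nP AP by blast
    obtain b where b: "b \<in> B" using ne B by blast
    have "b \<notin> X" using b B inX uniqblk AP by blast
    moreover have "b \<in> nodes Z" using b B un by blast
    ultimately have XnN: "X \<noteq> nodes Z" by blast
    obtain T where T: "T \<in> A" "T \<noteq> S0" using nS S0A by blast
    obtain t where t: "t \<in> T" using ne T AP by blast
    have "t \<notin> S0" using t T dis S0P AP by blast
    moreover have "t \<in> X" using t T inX by blast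
    ultimately have "X \<noteq> S0" by blast
    moreover have "S0 \<subseteq> X" using S0A inX by blast
    ultimately have XS: "X \<noteq> S0" "S0 \<subseteq> X" by blast+
    have "maximal_module Z S0" using mods S0P by blast
    hence "\<forall>Y. is_module Z Y \<longrightarrow> S0 \<subseteq> Y \<longrightarrow> Y = S0 \<or> Y = nodes Z"
      unfolding maximal_module_def by (elim conjE)
    hence "X = S0 \<or> X = nodes Z" using Xmod XS by blast
    thus False using XS XnN by blast
  qed
qed

theorem mainTheorem7:
  fixes Z :: "('n, 'r) lgraph" and Q :: "('n set, 'r) lgraph"
  assumes "decision_structure Z"
    and "decomp_quotient Z Q"
  shows "prime Q \<or> uniform_path3 Q"
  using assms(2)
proof (induction rule: decomp_quotient.induct)
  case (top Z P)
  show ?case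
  proof (cases "\<exists>P'. case1_partition Z P'")
    case True
    hence "case1_partition Z P" using top(2) by (simp add: decomp_partition_def)
    hence "maximal_partition Z P" unfolding case1_partition_def by (elim conjE)
    thus ?thesis using maximal_quotient_prime by blast
  next
    case False
    hence "case2_partition Z P" using top(2) by (simp add: decomp_partition_def)
    hence "path_candidate Z P" unfolding case2_partition_def by (elim conjE)
    hence "uniform_path3 (quotient Z P)" unfolding path_candidate_def by (elim conjE)
    thus ?thesis by blast
  qed
next
  case (factor Z P S Q)
  thus ?case by simp
qed

end
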